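(* Let $T$ be a complete theory with monster model $\mathcal{U}$, $A\subseteq\mathcal{U}$ small, $\mu\in\mathfrak{M}_x(\mathcal{U})$, and $\nu_1,\nu_2\in\mathfrak{M}_y(\mathcal{U})$ with $\operatorname{supp}(\nu_1)\cap\operatorname{supp}(\nu_2)=\emptyset$. Suppose $\mu\blacktriangleright_A\nu_1$ and $\mu\blacktriangleright_A\nu_2$. Then there exists a finite tuple $b$ from $\mathcal{U}$ such that for all $r,s\in[0,1]$ with $r+s=1$, $\mu\blacktriangleright_{Ab}r\nu_1+s\nu_2$.
   Context: For $C\subseteq\mathcal{U}$, $\mathcal{L}_x(C)$ is the Boolean algebra of formulas in $x$ with parameters from $C$ modulo $T$, embedded in $\mathcal{L}_{xy}(C)$ via $\varphi(x)\mapsto\varphi(x)\wedge y=y$; $\mathfrak{M}_x(C)$ is the set of finitely additive probability measures on $\mathcal{L}_x(C)$. For $\omega\in\mathfrak{M}_{xy}(C)$, $\pi_x(\omega)(\varphi(x))=\omega(\varphi(x)\wedge y=y)$ (similarly $\pi_y$); $\omega|_D$ is restriction. The support $\operatorname{supp}(\nu)$ of $\nu\in\mathfrak{M}_y(\mathcal{U})$ is the set of $q\in S_y(\mathcal{U})$ such that $\nu(\psi)>0$ for every $\psi\in q$. $\mathfrak{M}^{\mathrm{Am}}_{xy}(C)$ is the set of $\lambda\in\mathfrak{M}_{xy}(C)$ with $\lambda(\varphi(x)\wedge\psi(y))=\pi_x(\lambda)(\varphi(x))\pi_y(\lambda)(\psi(y))$ for all $\varphi(x)\in\mathcal{L}_x(C),\psi(y)\in\mathcal{L}_y(C)$.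 For $\lambda\in\mathfrak{M}^{\mathrm{Am}}_{xy}(C)$ with $\pi_x(\lambda)=\mu|_C$: $\operatorname{Amal}(\lambda,\mu)=\{\omega\in\mathfrak{M}^{\mathrm{Am}}_{xy}(\mathcal{U}):\omega|_C=\lambda,\pi_x(\omega)=\mu\}$. $\mu\blacktriangleright_C\nu$ means there is $\lambda\in\mathfrak{M}_{xy}(C)$ with $\pi_x(\lambda)=\mu|_C$, $\operatorname{Amal}(\lambda,\mu)\neq\emptyset$, and $\pi_y(\omega)=\nu$ for every $\omega\in\operatorname{Amal}(\lambda,\mu)$. $Ab$ denotes $A$ together with the entries of $b$. *)

theory Defs
  imports Complex_Main
begin

text \<open>The monster model is the whole type 'u. A structure is given by interpretations
  of function symbols 'f and relation symbols 'r (symbols may be applied to argument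
  lists of any length).\<close>

datatype ('f, 'u) trm = Var nat | Par 'u | App 'f "('f, 'u) trm list"

datatype ('f, 'r, 'u) fm =
    Bot
  | Eq "('f, 'u) trm" "('f, 'u) trm"
  | Rel 'r "('f, 'u) trm list"
  | Neg "('f, 'r, 'u) fm"
  | Conj "('f, 'r, 'u) fm" "('f, 'r, 'u) fm"
  | Ex nat "('f, 'r, 'u) fm"

fun eval :: "('f \<Rightarrow> 'u list \<Rightarrow> 'u) \<Rightarrow> (nat \<Rightarrow> 'u) \<Rightarrow> ('f, 'u) trm \<Rightarrow> 'u" where
  "eval F e (Var n) = e n"
| "eval F e (Par a) = a"
| "eval F e (App f ts) = F f (map (eval F e) ts)"

fun tvars :: "('f, 'u) trm \<Rightarrow> nat set" where
  "tvars (Var n) = {n}"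
| "tvars (Par a) = {}"
| "tvars (App f ts) = (\<Union>t\<in>set ts. tvars t)"

fun tpars :: "('f, 'u) trm \<Rightarrow> 'u set" where
  "tpars (Var n) = {}"
| "tpars (Par a) = {a}"
| "tpars (App f ts) = (\<Union>t\<in>set ts. tpars t)"

fun sat :: "('f \<Rightarrow> 'u list \<Rightarrow> 'u) \<Rightarrow> ('r \<Rightarrow> 'u list \<Rightarrow> bool) \<Rightarrow> (nat \<Rightarrow> 'u)
            \<Rightarrow> ('f, 'r, 'u) fm \<Rightarrow> bool" where
  "sat F R e Bot = False"
| "sat F R e (Eq t1 t2) = (eval F e t1 = eval F e t2)"
| "sat F R e (Rel r ts) = R r (map (eval F e) ts)"
| "sat F R e (Neg \<phi>) = (\<not> sat F R e \<phi>)"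
| "sat F R e (Conj \<phi> \<psi>) = (sat F R e \<phi> \<and> sat F R e \<psi>)"
| "sat F R e (Ex n \<phi>) = (\<exists>a. sat F R (e(n := a)) \<phi>)"

fun fv :: "('f, 'r, 'u) fm \<Rightarrow> nat set" where
  "fv Bot = {}"
| "fv (Eq t1 t2) = tvars t1 \<union> tvars t2"
| "fv (Rel r ts) = (\<Union>t\<in>set ts. tvars t)"
| "fv (Neg \<phi>) = fv \<phi>"
| "fv (Conj \<phi> \<psi>) = fv \<phi> \<union> fv \<psi>"
| "fv (Ex n \<phi>) = fv \<phi> - {n}"

fun params :: "('f, 'r, 'u) fm \<Rightarrow> 'u set" where
  "params Bot = {}"
| "params (Eq t1 t2) = tpars t1 \<union> tpars t2"
| "params (Rel r ts) = (\<Union>t\<in>set ts. tpars t)"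
| "params (Neg \<phi>) = params \<phi>"
| "params (Conj \<phi> \<psi>) = params \<phi> \<union> params \<psi>"
| "params (Ex n \<phi>) = params \<phi>"

definition saturated :: "('f \<Rightarrow> 'u list \<Rightarrow> 'u) \<Rightarrow> ('r \<Rightarrow> 'u list \<Rightarrow> bool) \<Rightarrow> 'k rel \<Rightarrow> bool" where
  "saturated F R \<kappa> \<longleftrightarrow>
     (\<forall>(C :: 'u set) (\<Sigma> :: ('f, 'r, 'u) fm set).
        (card_of C, \<kappa>) \<in> ordLess \<longrightarrow>
        (\<forall>\<phi>\<in>\<Sigma>. fv \<phi> \<subseteq> {0} \<and> params \<phi> \<subseteq> C) \<longrightarrow>
        (\<forall>\<Delta>. \<Delta> \<subseteq> \<Sigma> \<and> finite \<Delta> \<longrightarrow> (\<exists>e. \<forall>\<phi>\<in>\<Delta>. sat F R e \<phi>)) \<longrightarrow>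
        (\<exists>a. \<forall>\<phi>\<in>\<Sigma>. sat F R (\<lambda>_. a) \<phi>))"

definition automorphism :: "('f \<Rightarrow> 'u list \<Rightarrow> 'u) \<Rightarrow> ('r \<Rightarrow> 'u list \<Rightarrow> bool) \<Rightarrow> ('u \<Rightarrow> 'u) \<Rightarrow> bool" where
  "automorphism F R g \<longleftrightarrow> bij g \<and>
     (\<forall>f us. g (F f us) = F f (map g us)) \<and> (\<forall>r us. R r us = R r (map g us))"

definition elementary_on :: "('f \<Rightarrow> 'u list \<Rightarrow> 'u) \<Rightarrow> ('r \<Rightarrow> 'u list \<Rightarrow> bool) \<Rightarrow> 'u set \<Rightarrow> ('u \<Rightarrow> 'u) \<Rightarrow> bool" where
  "elementary_on F R D f \<longleftrightarrow>
     (\<forall>(\<phi> :: ('f, 'r, 'u) fm) e. params \<phi> = {} \<longrightarrow> (\<forall>n\<in>fv \<phi>. e n \<in> D) \<longrightarrow>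
        (sat F R e \<phi> \<longleftrightarrow> sat F R (f \<circ> e) \<phi>))"

definition strongly_homogeneous :: "('f \<Rightarrow> 'u list \<Rightarrow> 'u) \<Rightarrow> ('r \<Rightarrow> 'u list \<Rightarrow> bool) \<Rightarrow> 'k rel \<Rightarrow> bool" where
  "strongly_homogeneous F R \<kappa> \<longleftrightarrow>
     (\<forall>(D :: 'u set) f. (card_of D, \<kappa>) \<in> ordLess \<longrightarrow> elementary_on F R D f \<longrightarrow>
        (\<exists>g. automorphism F R g \<and> (\<forall>d\<in>D. g d = f d)))"

text \<open>Monster model for the complete theory T = Th(U): kappa-saturated and strongly
  kappa-homogeneous, kappa an uncountable cardinal larger than the language.\<close>
definition monster :: "('f \<Rightarrow> 'u list \<Rightarrow> 'u) \<Rightarrow> ('r \<Rightarrow> 'u list \<Rightarrow> bool) \<Rightarrow> 'k rel \<Rightarrow> bool" where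
  "monster F R \<kappa> \<longleftrightarrow> Card_order \<kappa> \<and> (natLeq, \<kappa>) \<in> ordLess \<and>
     (card_of (UNIV :: 'f set), \<kappa>) \<in> ordLess \<and> (card_of (UNIV :: 'r set), \<kappa>) \<in> ordLess \<and>
     saturated F R \<kappa> \<and> strongly_homogeneous F R \<kappa>"

text \<open>L_x(C): formulas in the variables x with parameters from C modulo T, represented by
  the sets of assignments they define in the monster model. With this representation
  phi(x) and phi(x) /\ y = y are literally the same element, so L_x(C) is a subalgebra
  of L_xy(C).\<close>
definition Lalg :: "('f \<Rightarrow> 'u list \<Rightarrow> 'u) \<Rightarrow> ('r \<Rightarrow> 'u list \<Rightarrow> bool) \<Rightarrow> nat list \<Rightarrow> 'u set
                    \<Rightarrow> (nat \<Rightarrow> 'u) set set" where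
  "Lalg F R x C = {{e. sat F R e \<phi>} | \<phi> :: ('f, 'r, 'u) fm. fv \<phi> \<subseteq> set x \<and> params \<phi> \<subseteq> C}"

definition keisler :: "(nat \<Rightarrow> 'u) set set \<Rightarrow> ((nat \<Rightarrow> 'u) set \<Rightarrow> real) \<Rightarrow> bool" where
  "keisler B \<mu> \<longleftrightarrow> \<mu> UNIV = 1 \<and> (\<forall>X\<in>B. 0 \<le> \<mu> X) \<and>
     (\<forall>X\<in>B. \<forall>Y\<in>B. X \<inter> Y = {} \<longrightarrow> \<mu> (X \<union> Y) = \<mu> X + \<mu> Y)"

text \<open>Measures are functions; two measures are equal on an algebra if they agree on it.\<close>
definition agree :: "(nat \<Rightarrow> 'u) set set \<Rightarrow> ((nat \<Rightarrow> 'u) set \<Rightarrow> real) \<Rightarrow> ((nat \<Rightarrow> 'u) set \<Rightarrow> real) \<Rightarrow> bool" where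
  "agree B \<mu> \<nu> \<longleftrightarrow> (\<forall>X\<in>B. \<mu> X = \<nu> X)"

definition Mx where "Mx F R x C = {\<mu>. keisler (Lalg F R x C) \<mu>}"

definition MAm where
  "MAm F R x y C = {lam. keisler (Lalg F R (x @ y) C) lam \<and>
     (\<forall>X\<in>Lalg F R x C. \<forall>Y\<in>Lalg F R y C. lam (X \<inter> Y) = lam X * lam Y)}"

definition Amal where
  "Amal F R x y C lam \<mu> = {\<omega>. \<omega> \<in> MAm F R x y UNIV \<and> agree (Lalg F R (x @ y) C) \<omega> lam \<and>
                             agree (Lalg F R x UNIV) \<omega> \<mu>}"

definition triangle where
  "triangle F R x y C \<mu> \<nu> \<longleftrightarrow>
     (\<exists>lam. lam \<in> Mx F R (x @ y) C \<and> agree (Lalg F R x C) lam \<mu> \<and>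
          Amal F R x y C lam \<mu> \<noteq> {} \<and>
          (\<forall>\<omega>\<in>Amal F R x y C lam \<mu>. agree (Lalg F R y UNIV) \<omega> \<nu>))"

text \<open>S_y(U): complete types = ultrafilters of the Boolean algebra L_y(U).\<close>
definition is_type :: "(nat \<Rightarrow> 'u) set set \<Rightarrow> (nat \<Rightarrow> 'u) set set \<Rightarrow> bool" where
  "is_type B q \<longleftrightarrow> q \<subseteq> B \<and> UNIV \<in> q \<and> {} \<notin> q \<and>
     (\<forall>X\<in>q. \<forall>Y\<in>q. X \<inter> Y \<in> q) \<and> (\<forall>X\<in>q. \<forall>Y\<in>B. X \<subseteq> Y \<longrightarrow> Y \<in> q) \<and>
     (\<forall>X\<in>B. X \<in> q \<or> - X \<in> q)"

definition supp where
  "supp F R y \<nu> = {q. is_type (Lalg F R y UNIV) q \<and> (\<forall>X\<in>q. 0 < \<nu> X)}"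

end

theory Submission
  imports Defs
begin

definition balg :: "'a set set \<Rightarrow> bool" where
  "balg B \<longleftrightarrow> UNIV \<in> B \<and> (\<forall>X\<in>B. - X \<in> B) \<and> (\<forall>X\<in>B. \<forall>Y\<in>B. X \<inter> Y \<in> B)"

lemma Lalg_UNIV: "UNIV \<in> Lalg F R x C"
  unfolding Lalg_def
  apply (rule CollectI)
  apply (rule exI[where x="Neg Bot"])
  by simp

lemma Lalg_compl: fixes F :: "'f \<Rightarrow> 'u list \<Rightarrow> 'u" and R :: "'r \<Rightarrow> 'u list \<Rightarrow> bool" assumes "X \<in> Lalg F R x C" shows "- X \<in> Lalg F R x C"
proof -
  from assms obtain \<phi> :: "('f,'r,'u) fm" where "X = {e. sat F R e \<phi>}" "fv \<phi> \<subseteq> set x" "params \<phi> \<subseteq> C"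
    unfolding Lalg_def by blast
  then have "- X = {e. sat F R e (Neg \<phi>)} \<and> fv (Neg \<phi>) \<subseteq> set x \<and> params (Neg \<phi>) \<subseteq> C" by auto
  then show ?thesis unfolding Lalg_def by blast
qed

lemma Lalg_Int: fixes F :: "'f \<Rightarrow> 'u list \<Rightarrow> 'u" and R :: "'r \<Rightarrow> 'u list \<Rightarrow> bool" assumes "X \<in> Lalg F R x C" "Y \<in> Lalg F R x C" shows "X \<inter> Y \<in> Lalg F R x C"
proof -
  from assms(1) obtain \<phi> :: "('f,'r,'u) fm" where "X = {e. sat F R e \<phi>}" "fv \<phi> \<subseteq> set x" "params \<phi> \<subseteq> C"
    unfolding Lalg_def by blast
  moreover from assms(2) obtain \<psi> :: "('f,'r,'u) fm" where "Y = {e. sat F R e \<psi>}" "fv \<psi> \<subseteq> set x" "params \<psi> \<subseteq> C"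
    unfolding Lalg_def by blast
  ultimately have "X \<inter> Y = {e. sat F R e (Conj \<phi> \<psi>)} \<and> fv (Conj \<phi> \<psi>) \<subseteq> set x \<and> params (Conj \<phi> \<psi>) \<subseteq> C" by auto
  then show ?thesis unfolding Lalg_def by blast
qed

lemma balg_Lalg: "balg (Lalg F R x C)"
  unfolding balg_def using Lalg_UNIV Lalg_compl Lalg_Int by blast

lemma Lalg_mono: "set x \<subseteq> set x' \<Longrightarrow> C \<subseteq> C' \<Longrightarrow> Lalg F R x C \<subseteq> Lalg F R x' C'"
  unfolding Lalg_def by blast

lemma finite_tpars: "finite (tpars t)"
  by (induction t) auto

lemma finite_params: "finite (params \<phi>)"
  by (induction \<phi>) (auto simp: finite_tpars)

lemma balg_empty: "balg B \<Longrightarrow> {} \<in> B"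
  unfolding balg_def by (metis Compl_UNIV_eq)

lemma keisler_mono: "B' \<subseteq> B \<Longrightarrow> keisler B \<nu> \<Longrightarrow> keisler B' \<nu>"
  unfolding keisler_def by blast

lemma kadd: "keisler B \<nu> \<Longrightarrow> X \<in> B \<Longrightarrow> Y \<in> B \<Longrightarrow> X \<inter> Y = {} \<Longrightarrow> \<nu> (X \<union> Y) = \<nu> X + \<nu> Y"
  unfolding keisler_def by blast

lemma knn: "keisler B \<nu> \<Longrightarrow> X \<in> B \<Longrightarrow> 0 \<le> \<nu> X"
  unfolding keisler_def by blast

lemma kone: "keisler B \<nu> \<Longrightarrow> \<nu> UNIV = 1"
  unfolding keisler_def by blast

lemma k_split:
  assumes "balg B" "keisler B \<nu>" "X \<in> B" "Y \<in> B"
  shows "\<nu> X = \<nu> (X \<inter> Y) + \<nu> (X \<inter> - Y)"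
proof -
  have "(X \<inter> Y) \<union> (X \<inter> - Y) = X" by blast
  moreover have "X \<inter> Y \<in> B" "X \<inter> - Y \<in> B" using assms unfolding balg_def by auto
  ultimately show ?thesis using kadd[OF assms(2), of "X \<inter> Y" "X \<inter> - Y"] by auto
qed

lemma k_compl:
  assumes "balg B" "keisler B \<nu>" "X \<in> B"
  shows "\<nu> (- X) = 1 - \<nu> X"
  using k_split[OF assms(1,2), of UNIV X] assms kone[OF assms(2)] unfolding balg_def by auto

lemma k_mono:
  assumes "balg B" "keisler B \<nu>" "X \<in> B" "Y \<in> B" "X \<subseteq> Y"
  shows "\<nu> X \<le> \<nu> Y"
proof -
  have "\<nu> Y = \<nu> (Y \<inter> X) + \<nu> (Y \<inter> - X)" using k_split assms by blast
  moreover have "Y \<inter> X = X" using assms by blast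
  moreover have "0 \<le> \<nu> (Y \<inter> - X)" using assms knn unfolding balg_def by blast
  ultimately show ?thesis by simp
qed

lemma k_zero_inter:
  assumes "balg B" "keisler B \<nu>" "X \<in> B" "Y \<in> B" "\<nu> X = 0"
  shows "\<nu> (Y \<inter> X) = 0"
proof -
  have "Y \<inter> X \<in> B" using assms unfolding balg_def by blast
  then have "\<nu> (Y \<inter> X) \<le> \<nu> X" "0 \<le> \<nu> (Y \<inter> X)"
    using k_mono[OF assms(1,2) \<open>Y \<inter> X \<in> B\<close> assms(3)] knn[OF assms(2)] by auto
  then show ?thesis using assms by simp
qed

lemma k_one_inter:
  assumes "balg B" "keisler B \<nu>" "X \<in> B" "Y \<in> B" "\<nu> Y = 1"
  shows "\<nu> (X \<inter> Y) = \<nu> X"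
proof -
  have "\<nu> (- Y) = 0" using k_compl[OF assms(1,2,4)] assms(5) by simp
  then have "\<nu> (X \<inter> - Y) = 0" using k_zero_inter[OF assms(1,2), of "- Y" X] assms unfolding balg_def by blast
  then show ?thesis using k_split[OF assms(1-4)] by simp
qed


lemma separate:
  assumes B: "balg B" and k1: "keisler B \<nu>1" and k2: "keisler B \<nu>2"
    and no: "\<not> (\<exists>P\<in>B. \<nu>1 P = 1 \<and> \<nu>2 P = 0)"
  shows "\<exists>q. is_type B q \<and> (\<forall>X\<in>q. 0 < \<nu>1 X) \<and> (\<forall>X\<in>q. 0 < \<nu>2 X)"
proof -
  have BU: "UNIV \<in> B" and Bc: "\<And>X. X \<in> B \<Longrightarrow> - X \<in> B" and Bi: "\<And>X Y. X \<in> B \<Longrightarrow> Y \<in> B \<Longrightarrow> X \<inter> Y \<in> B"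
    using B unfolding balg_def by auto
  define F0 where "F0 = {Z\<in>B. \<exists>W1\<in>B. \<exists>W2\<in>B. \<nu>1 W1 = 1 \<and> \<nu>2 W2 = 1 \<and> W1 \<inter> W2 \<subseteq> Z}"
  define isf where "isf q \<longleftrightarrow> q \<subseteq> B \<and> {} \<notin> q \<and> (\<forall>X\<in>q. \<forall>Y\<in>q. X \<inter> Y \<in> q) \<and>
      (\<forall>X\<in>q. \<forall>Y\<in>B. X \<subseteq> Y \<longrightarrow> Y \<in> q)" for q
  have isf_Int: "\<And>q X Y. isf q \<Longrightarrow> X \<in> q \<Longrightarrow> Y \<in> q \<Longrightarrow> X \<inter> Y \<in> q"
    unfolding isf_def by metis
  have isf_sub: "\<And>q. isf q \<Longrightarrow> q \<subseteq> B" unfolding isf_def by metis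
  define AA where "AA = {q. isf q \<and> F0 \<subseteq> q}"
  have F0AA: "F0 \<in> AA"
  proof -
    have "{} \<notin> F0"
    proof
      assume "{} \<in> F0"
      then obtain W1 W2 where W: "W1 \<in> B" "W2 \<in> B" "\<nu>1 W1 = 1" "\<nu>2 W2 = 1" "W1 \<inter> W2 = {}"
        unfolding F0_def by blast
      have "\<nu>2 W1 \<le> \<nu>2 (- W2)" using k_mono[OF B k2 W(1) Bc[OF W(2)]] W(5) by blast
      moreover have "\<nu>2 (- W2) = 0" using k_compl[OF B k2 W(2)] W(4) by simp
      moreover have "0 \<le> \<nu>2 W1" using knn[OF k2 W(1)] .
      ultimately have "\<nu>2 W1 = 0" by simp
      then show False using no W by blast
    qed
    moreover have "\<forall>X\<in>F0. \<forall>Y\<in>F0. X \<inter> Y \<in> F0"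
    proof (intro ballI)
      fix X Y assume "X \<in> F0" "Y \<in> F0"
      then obtain W1 W2 V1 V2 where W: "W1 \<in> B" "W2 \<in> B" "\<nu>1 W1 = 1" "\<nu>2 W2 = 1" "W1 \<inter> W2 \<subseteq> X"
        and V: "V1 \<in> B" "V2 \<in> B" "\<nu>1 V1 = 1" "\<nu>2 V2 = 1" "V1 \<inter> V2 \<subseteq> Y" and XY: "X \<in> B" "Y \<in> B"
        unfolding F0_def by blast
      have "\<nu>1 (W1 \<inter> V1) = 1" using k_one_inter[OF B k1 W(1) V(1) V(3)] W(3) by simp
      moreover have "\<nu>2 (W2 \<inter> V2) = 1" using k_one_inter[OF B k2 W(2) V(2) V(4)] W(4) by simp
      moreover have "(W1 \<inter> V1) \<inter> (W2 \<inter> V2) \<subseteq> X \<inter> Y" using W V by blast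
      ultimately show "X \<inter> Y \<in> F0" unfolding F0_def using Bi W V XY by blast
    qed
    moreover have "\<forall>X\<in>F0. \<forall>Y\<in>B. X \<subseteq> Y \<longrightarrow> Y \<in> F0"
      unfolding F0_def by blast
    moreover have "F0 \<subseteq> B" unfolding F0_def by blast
    ultimately show ?thesis unfolding AA_def isf_def by blast
  qed
  have "\<forall>C\<in>chains AA. \<exists>U\<in>AA. \<forall>X\<in>C. X \<subseteq> U"
  proof
    fix C assume C: "C \<in> chains AA"
    show "\<exists>U\<in>AA. \<forall>X\<in>C. X \<subseteq> U"
    proof (cases "C = {}")
      case True then show ?thesis using F0AA by blast
    next
      case False
      have CA: "C \<subseteq> AA" using chainsD2[OF C] .
      have "\<Union>C \<in> AA"
      proof -
        have "\<forall>X\<in>\<Union>C. \<forall>Y\<in>\<Union>C. X \<inter> Y \<in> \<Union>C"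
        proof (intro ballI)
          fix X Y assume "X \<in> \<Union>C" "Y \<in> \<Union>C"
          then obtain q1 q2 where q: "q1 \<in> C" "q2 \<in> C" "X \<in> q1" "Y \<in> q2" by blast
          then have "q1 \<subseteq> q2 \<or> q2 \<subseteq> q1" using chainsD[OF C] by blast
          moreover have "isf q1" "isf q2" using q CA unfolding AA_def by auto
          ultimately have "X \<inter> Y \<in> q1 \<or> X \<inter> Y \<in> q2"
          proof (elim disjE conjE)
            assume "q1 \<subseteq> q2" "isf q1" "isf q2"
            then have "X \<inter> Y \<in> q2" using q(3,4) isf_Int[of q2 X Y] by blast
            then show ?thesis by blast
          next
            assume "q2 \<subseteq> q1" "isf q1" "isf q2"
            then have "X \<inter> Y \<in> q1" using q(3,4) isf_Int[of q1 X Y] by blast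
            then show ?thesis by blast
          qed
          then show "X \<inter> Y \<in> \<Union>C" using q(1,2) by blast
        qed
        moreover have "\<forall>q\<in>C. isf q \<and> F0 \<subseteq> q" using CA unfolding AA_def by blast
        moreover have "\<Union>C \<subseteq> B" using CA unfolding AA_def isf_def by auto
        moreover have "{} \<notin> \<Union>C" using CA unfolding AA_def isf_def by auto
        moreover have "\<forall>X\<in>\<Union>C. \<forall>Y\<in>B. X \<subseteq> Y \<longrightarrow> Y \<in> \<Union>C"
        proof (intro ballI impI)
          fix X Y assume "X \<in> \<Union>C" "Y \<in> B" "X \<subseteq> Y"
          then obtain q where "q \<in> C" "X \<in> q" by blast
          moreover then have "isf q" using CA unfolding AA_def by blast
          ultimately show "Y \<in> \<Union>C" using \<open>Y \<in> B\<close> \<open>X \<subseteq> Y\<close> unfolding isf_def by blast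
        qed
        moreover have "F0 \<subseteq> \<Union>C" using CA False unfolding AA_def by blast
        ultimately show ?thesis unfolding AA_def isf_def by blast
      qed
      then show ?thesis by blast
    qed
  qed
  from Zorn_Lemma2[OF this] obtain M where M: "M \<in> AA" and Mmax: "\<forall>X\<in>AA. M \<subseteq> X \<longrightarrow> X = M"
    by blast
  have Mf: "isf M" "F0 \<subseteq> M" using M unfolding AA_def by auto
  have UM: "UNIV \<in> M"
  proof -
    have "UNIV \<in> F0" unfolding F0_def using BU kone[OF k1] kone[OF k2] by blast
    then show ?thesis using Mf by blast
  qed
  have ult: "\<forall>X\<in>B. X \<in> M \<or> - X \<in> M"
  proof (rule ballI, rule ccontr)
    fix X assume X: "X \<in> B" and nX: "\<not> (X \<in> M \<or> - X \<in> M)"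
    define M' where "M' = {Z\<in>B. \<exists>W\<in>M. W \<inter> X \<subseteq> Z}"
    have "isf M'"
    proof -
      have "{} \<notin> M'"
      proof
        assume "{} \<in> M'"
        then obtain W where "W \<in> M" "W \<inter> X = {}" unfolding M'_def by blast
        then have "W \<subseteq> - X" by blast
        then have "- X \<in> M" using Mf(1) \<open>W \<in> M\<close> Bc[OF X] unfolding isf_def by blast
        then show False using nX by blast
      qed
      moreover have "\<forall>Z1\<in>M'. \<forall>Z2\<in>M'. Z1 \<inter> Z2 \<in> M'"
      proof (intro ballI)
        fix Z1 Z2 assume "Z1 \<in> M'" "Z2 \<in> M'"
        then obtain W1 W2 where "W1 \<in> M" "W2 \<in> M" "W1 \<inter> X \<subseteq> Z1" "W2 \<inter> X \<subseteq> Z2" "Z1 \<in> B" "Z2 \<in> B"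
          unfolding M'_def by blast
        note W = this
        have "W1 \<inter> W2 \<in> M" using isf_Int[OF Mf(1) W(1,2)] .
        moreover have "(W1 \<inter> W2) \<inter> X \<subseteq> Z1 \<inter> Z2" using W by blast
        moreover have "Z1 \<inter> Z2 \<in> B" using Bi W(5,6) .
        ultimately show "Z1 \<inter> Z2 \<in> M'" unfolding M'_def by blast
      qed
      moreover have "\<forall>Z1\<in>M'. \<forall>Y\<in>B. Z1 \<subseteq> Y \<longrightarrow> Y \<in> M'" unfolding M'_def by blast
      moreover have "M' \<subseteq> B" unfolding M'_def by blast
      ultimately show ?thesis unfolding isf_def by blast
    qed
    moreover have "M \<subseteq> M'"
    proof
      fix Z assume "Z \<in> M"
      then have "Z \<in> B" "Z \<inter> X \<subseteq> Z" using isf_sub[OF Mf(1)] by auto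
      then show "Z \<in> M'" unfolding M'_def using \<open>Z \<in> M\<close> by blast
    qed
    ultimately have "M' \<in> AA" using Mf(2) unfolding AA_def by blast
    then have "M' = M" using Mmax \<open>M \<subseteq> M'\<close> by blast
    moreover have "X \<in> M'" unfolding M'_def using UM X by blast
    ultimately show False using nX by blast
  qed
  have pos: "0 < \<nu> X" if k: "keisler B \<nu>" and X: "X \<in> M" and F: "\<And>Z. Z \<in> B \<Longrightarrow> \<nu> Z = 1 \<Longrightarrow> Z \<in> F0" for \<nu> X
  proof (rule ccontr)
    assume "\<not> 0 < \<nu> X"
    have XB: "X \<in> B" using X isf_sub[OF Mf(1)] by blast
    then have "\<nu> X = 0" using knn[OF k XB] \<open>\<not> 0 < \<nu> X\<close> by simp
    then have "\<nu> (- X) = 1" using k_compl[OF B k XB] by simp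
    then have "- X \<in> M" using F[OF Bc[OF XB]] Mf(2) by blast
    then have "X \<inter> - X \<in> M" using X Mf(1) unfolding isf_def by blast
    then show False using Mf(1) unfolding isf_def by simp
  qed
  have "is_type B M"
  proof -
    have "M \<subseteq> B" "{} \<notin> M" "\<forall>X\<in>M. \<forall>Y\<in>M. X \<inter> Y \<in> M" "\<forall>X\<in>M. \<forall>Y\<in>B. X \<subseteq> Y \<longrightarrow> Y \<in> M"
      using Mf(1) unfolding isf_def by simp_all
    then show ?thesis unfolding is_type_def using UM ult by simp
  qed
  moreover have "\<forall>X\<in>M. 0 < \<nu>1 X"
  proof
    fix X assume "X \<in> M"
    show "0 < \<nu>1 X"
    proof (rule pos[OF k1 \<open>X \<in> M\<close>])
      fix Z assume "Z \<in> B" "\<nu>1 Z = 1"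
      then show "Z \<in> F0" unfolding F0_def using BU kone[OF k2] by blast
    qed
  qed
  moreover have "\<forall>X\<in>M. 0 < \<nu>2 X"
  proof
    fix X assume "X \<in> M"
    show "0 < \<nu>2 X"
    proof (rule pos[OF k2 \<open>X \<in> M\<close>])
      fix Z assume "Z \<in> B" "\<nu>2 Z = 1"
      then show "Z \<in> F0" unfolding F0_def using BU kone[OF k1] by blast
    qed
  qed
  ultimately show ?thesis by blast
qed


lemma half:
  fixes F :: "'f \<Rightarrow> 'u list \<Rightarrow> 'u" and R :: "'r \<Rightarrow> 'u list \<Rightarrow> bool"
  assumes om: "\<omega> \<in> Amal F R x y C \<omega>r \<mu>"
    and AC: "A \<subseteq> C" and P: "P \<in> Lalg F R y C"
    and om1: "\<omega>1 \<in> Amal F R x y A lam1 \<mu>"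
    and tri1: "\<forall>\<omega>\<in>Amal F R x y A lam1 \<mu>. agree (Lalg F R y UNIV) \<omega> \<nu>1"
    and om2: "keisler (Lalg F R (x @ y) UNIV) \<omega>2"
    and P1: "\<omega>1 P = 1" and P2: "\<omega>2 P = 0"
    and r: "0 \<le> r" and s: "0 \<le> s"
    and omr: "\<forall>X\<in>Lalg F R (x @ y) UNIV. \<omega>r X = r * \<omega>1 X + s * \<omega>2 X"
  shows "\<forall>Y\<in>Lalg F R y UNIV. \<omega> (Y \<inter> P) = r * \<nu>1 Y"
proof
  let ?B = "Lalg F R (x @ y) UNIV"
  have B: "balg ?B" by (rule balg_Lalg)
  have subs: "Lalg F R y UNIV \<subseteq> ?B" "Lalg F R x UNIV \<subseteq> ?B" "Lalg F R (x @ y) C \<subseteq> ?B"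
    "Lalg F R y C \<subseteq> Lalg F R (x @ y) C" "Lalg F R (x @ y) A \<subseteq> Lalg F R (x @ y) C"
    "Lalg F R y C \<subseteq> Lalg F R y UNIV"
    by (rule Lalg_mono; use AC in auto)+
  from om have k: "keisler ?B \<omega>"
    and prod: "\<forall>X\<in>Lalg F R x UNIV. \<forall>Y\<in>Lalg F R y UNIV. \<omega> (X \<inter> Y) = \<omega> X * \<omega> Y"
    and agC: "\<forall>X\<in>Lalg F R (x @ y) C. \<omega> X = \<omega>r X"
    and agx: "\<forall>X\<in>Lalg F R x UNIV. \<omega> X = \<mu> X"
    unfolding Amal_def MAm_def agree_def by auto
  from om1 have k1: "keisler ?B \<omega>1"
    and agA1: "\<forall>X\<in>Lalg F R (x @ y) A. \<omega>1 X = lam1 X"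
    and agx1: "\<forall>X\<in>Lalg F R x UNIV. \<omega>1 X = \<mu> X"
    unfolding Amal_def MAm_def agree_def by auto
  have PB: "P \<in> ?B" "P \<in> Lalg F R (x @ y) C" "P \<in> Lalg F R y UNIV" using P subs by auto
  have oP: "\<omega> P = r" using agC PB omr P1 P2 by simp
  fix Y assume Y: "Y \<in> Lalg F R y UNIV"
  have YP: "Y \<inter> P \<in> Lalg F R y UNIV" using Lalg_Int[OF Y PB(3)] .
  have YPB: "Y \<inter> P \<in> ?B" using YP subs by auto
  show "\<omega> (Y \<inter> P) = r * \<nu>1 Y"
  proof (cases "r = 0")
    case True
    have "\<omega> (Y \<inter> P) \<le> \<omega> P" using k_mono[OF B k YPB PB(1)] by blast
    moreover have "0 \<le> \<omega> (Y \<inter> P)" using knn[OF k YPB] .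
    ultimately show ?thesis using oP True by simp
  next
    case False
    then have rp: "0 < r" using r by simp
    define \<omega>' where "\<omega>' = (\<lambda>X. \<omega> (X \<inter> P) / r)"
    have oX: "\<omega>' X = \<omega> X" if X: "X \<in> Lalg F R x UNIV" for X
    proof -
      have "\<omega> (X \<inter> P) = \<omega> X * \<omega> P" using prod X PB(3) by blast
      then show ?thesis unfolding \<omega>'_def using oP rp by simp
    qed
    have "keisler ?B \<omega>'"
      unfolding keisler_def
    proof (intro conjI ballI impI)
      show "\<omega>' UNIV = 1" unfolding \<omega>'_def using oP rp by simp
    next
      fix X assume "X \<in> ?B"
      then have "X \<inter> P \<in> ?B" using Lalg_Int PB(1) by blast
      then show "0 \<le> \<omega>' X" unfolding \<omega>'_def using knn[OF k] r by simp
    next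
      fix X Y assume XY: "X \<in> ?B" "Y \<in> ?B" "X \<inter> Y = {}"
      have "(X \<union> Y) \<inter> P = (X \<inter> P) \<union> (Y \<inter> P)" by blast
      moreover have "X \<inter> P \<in> ?B" "Y \<inter> P \<in> ?B" using XY Lalg_Int PB(1) by blast+
      moreover have "(X \<inter> P) \<inter> (Y \<inter> P) = {}" using XY by blast
      ultimately have "\<omega> ((X \<union> Y) \<inter> P) = \<omega> (X \<inter> P) + \<omega> (Y \<inter> P)" using kadd[OF k] by simp
      then show "\<omega>' (X \<union> Y) = \<omega>' X + \<omega>' Y" unfolding \<omega>'_def by (simp add: add_divide_distrib)
    qed
    moreover have "\<forall>X\<in>Lalg F R x UNIV. \<forall>Z\<in>Lalg F R y UNIV. \<omega>' (X \<inter> Z) = \<omega>' X * \<omega>' Z"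
    proof (intro ballI)
      fix X Z assume X: "X \<in> Lalg F R x UNIV" and Z: "Z \<in> Lalg F R y UNIV"
      have ZP: "Z \<inter> P \<in> Lalg F R y UNIV" using Lalg_Int[OF Z PB(3)] .
      have "\<omega> (X \<inter> (Z \<inter> P)) = \<omega> X * \<omega> (Z \<inter> P)" using prod X ZP by blast
      moreover have "X \<inter> Z \<inter> P = X \<inter> (Z \<inter> P)" by blast
      ultimately show "\<omega>' (X \<inter> Z) = \<omega>' X * \<omega>' Z" using oX[OF X] unfolding \<omega>'_def by simp
    qed
    moreover have "\<forall>X\<in>Lalg F R (x @ y) A. \<omega>' X = lam1 X"
    proof
      fix X assume X: "X \<in> Lalg F R (x @ y) A"
      have XC: "X \<in> Lalg F R (x @ y) C" using X subs by auto
      have XB: "X \<in> ?B" using XC subs by auto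
      have XPC: "X \<inter> P \<in> Lalg F R (x @ y) C" using Lalg_Int[OF XC PB(2)] .
      have XPB: "X \<inter> P \<in> ?B" using XPC subs by auto
      have "\<omega>1 (X \<inter> P) = \<omega>1 X" using k_one_inter[OF B k1 XB PB(1) P1] .
      moreover have "\<omega>2 (X \<inter> P) = 0" using k_zero_inter[OF B om2 PB(1) XB P2] .
      moreover have "\<omega> (X \<inter> P) = \<omega>r (X \<inter> P)" using agC XPC by blast
      ultimately have "\<omega> (X \<inter> P) = r * lam1 X" using omr XPB agA1 X by simp
      then show "\<omega>' X = lam1 X" unfolding \<omega>'_def using rp by simp
    qed
    moreover have "\<forall>X\<in>Lalg F R x UNIV. \<omega>' X = \<mu> X" using oX agx by simp
    ultimately have "\<omega>' \<in> Amal F R x y A lam1 \<mu>"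
      unfolding Amal_def MAm_def agree_def by blast
    then have "\<omega>' Y = \<nu>1 Y" using tri1 Y unfolding agree_def by blast
    then show ?thesis unfolding \<omega>'_def using rp by (simp add: field_simps)
  qed
qed


theorem proposition5p9:
  fixes F :: "'f \<Rightarrow> 'u list \<Rightarrow> 'u" and R :: "'r \<Rightarrow> 'u list \<Rightarrow> bool" and \<kappa> :: "'k rel"
    and x y :: "nat list" and A :: "'u set"
    and \<mu> \<nu>1 \<nu>2 :: "(nat \<Rightarrow> 'u) set \<Rightarrow> real"
  assumes "monster F R \<kappa>"
    and "(card_of A, \<kappa>) \<in> ordLess"
    and "set x \<inter> set y = {}"
    and "\<mu> \<in> Mx F R x UNIV"
    and "\<nu>1 \<in> Mx F R y UNIV" and "\<nu>2 \<in> Mx F R y UNIV"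
    and "supp F R y \<nu>1 \<inter> supp F R y \<nu>2 = {}"
    and "triangle F R x y A \<mu> \<nu>1" and "triangle F R x y A \<mu> \<nu>2"
  shows "\<exists>b :: 'u list. \<forall>r s :: real. 0 \<le> r \<and> 0 \<le> s \<and> r + s = 1 \<longrightarrow>
           triangle F R x y (A \<union> set b) \<mu> (\<lambda>X. r * \<nu>1 X + s * \<nu>2 X)"
proof -
  let ?By = "Lalg F R y UNIV"
  let ?B = "Lalg F R (x @ y) UNIV"
  have kn1: "keisler ?By \<nu>1" and kn2: "keisler ?By \<nu>2" using assms(5,6) unfolding Mx_def by auto
  obtain lam1 where l1: "lam1 \<in> Mx F R (x @ y) A" "Amal F R x y A lam1 \<mu> \<noteq> {}"
    and t1: "\<forall>\<omega>\<in>Amal F R x y A lam1 \<mu>. agree ?By \<omega> \<nu>1"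
    using assms(8) unfolding triangle_def by blast
  obtain lam2 where l2: "lam2 \<in> Mx F R (x @ y) A" "Amal F R x y A lam2 \<mu> \<noteq> {}"
    and t2: "\<forall>\<omega>\<in>Amal F R x y A lam2 \<mu>. agree ?By \<omega> \<nu>2"
    using assms(9) unfolding triangle_def by blast
  obtain \<omega>1 where o1: "\<omega>1 \<in> Amal F R x y A lam1 \<mu>" using l1 by blast
  obtain \<omega>2 where o2: "\<omega>2 \<in> Amal F R x y A lam2 \<mu>" using l2 by blast
  have k1: "keisler ?B \<omega>1" and pr1: "\<forall>X\<in>Lalg F R x UNIV. \<forall>Y\<in>?By. \<omega>1 (X \<inter> Y) = \<omega>1 X * \<omega>1 Y"
    and x1: "\<forall>X\<in>Lalg F R x UNIV. \<omega>1 X = \<mu> X"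
    using o1 unfolding Amal_def MAm_def agree_def by auto
  have k2: "keisler ?B \<omega>2" and pr2: "\<forall>X\<in>Lalg F R x UNIV. \<forall>Y\<in>?By. \<omega>2 (X \<inter> Y) = \<omega>2 X * \<omega>2 Y"
    and x2: "\<forall>X\<in>Lalg F R x UNIV. \<omega>2 X = \<mu> X"
    using o2 unfolding Amal_def MAm_def agree_def by auto
  have y1: "\<forall>Y\<in>?By. \<omega>1 Y = \<nu>1 Y" using t1 o1 unfolding agree_def by blast
  have y2: "\<forall>Y\<in>?By. \<omega>2 Y = \<nu>2 Y" using t2 o2 unfolding agree_def by blast
  have "\<exists>P\<in>?By. \<nu>1 P = 1 \<and> \<nu>2 P = 0"
  proof (rule ccontr)
    assume "\<not> (\<exists>P\<in>?By. \<nu>1 P = 1 \<and> \<nu>2 P = 0)"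
    from separate[OF balg_Lalg kn1 kn2 this] obtain q where
      "is_type ?By q" "\<forall>X\<in>q. 0 < \<nu>1 X" "\<forall>X\<in>q. 0 < \<nu>2 X" by blast
    then have "q \<in> supp F R y \<nu>1 \<inter> supp F R y \<nu>2" unfolding supp_def by blast
    then show False using assms(7) by blast
  qed
  then obtain P where PBy: "P \<in> ?By" and P1: "\<nu>1 P = 1" and P2: "\<nu>2 P = 0" by blast
  then obtain \<phi> :: "('f,'r,'u) fm" where \<phi>: "P = {e. sat F R e \<phi>}" "fv \<phi> \<subseteq> set y"
    unfolding Lalg_def by blast
  obtain b where b: "set b = params \<phi>" using finite_list[OF finite_params[of \<phi>]] by (elim exE)
  have PC: "P \<in> Lalg F R y (A \<union> set b)" unfolding Lalg_def using \<phi> b by blast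
  show ?thesis
  proof (intro exI allI impI)
    fix r s :: real assume rs: "0 \<le> r \<and> 0 \<le> s \<and> r + s = 1"
    define C where "C = A \<union> set b"
    define \<omega>r where "\<omega>r = (\<lambda>X. r * \<omega>1 X + s * \<omega>2 X)"
    have subs: "Lalg F R (x @ y) C \<subseteq> ?B" "Lalg F R x C \<subseteq> Lalg F R x UNIV"
      "Lalg F R x UNIV \<subseteq> ?B" "?By \<subseteq> ?B"
      by (rule Lalg_mono; auto)+
    have kr: "keisler ?B \<omega>r"
      unfolding keisler_def
    proof (intro conjI ballI impI)
      show "\<omega>r UNIV = 1" unfolding \<omega>r_def using kone[OF k1] kone[OF k2] rs by simp
    next
      fix X assume "X \<in> ?B"
      then show "0 \<le> \<omega>r X" unfolding \<omega>r_def using knn[OF k1] knn[OF k2] rs by simp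
    next
      fix X Y assume "X \<in> ?B" "Y \<in> ?B" "X \<inter> Y = {}"
      then show "\<omega>r (X \<union> Y) = \<omega>r X + \<omega>r Y" unfolding \<omega>r_def
        using kadd[OF k1] kadd[OF k2] by (simp add: algebra_simps)
    qed
    have rx: "\<forall>X\<in>Lalg F R x UNIV. \<omega>r X = \<mu> X"
    proof
      fix X assume "X \<in> Lalg F R x UNIV"
      then have "\<omega>r X = (r + s) * \<mu> X" unfolding \<omega>r_def using x1 x2 by (simp add: algebra_simps)
      then show "\<omega>r X = \<mu> X" using rs by simp
    qed
    have "\<omega>r \<in> MAm F R x y UNIV"
      unfolding MAm_def
    proof (intro CollectI conjI ballI)
      show "keisler ?B \<omega>r" by (rule kr)
    next
      fix X Y assume X: "X \<in> Lalg F R x UNIV" and Y: "Y \<in> ?By"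
      have "\<omega>r (X \<inter> Y) = r * (\<mu> X * \<nu>1 Y) + s * (\<mu> X * \<nu>2 Y)"
        unfolding \<omega>r_def using pr1 pr2 x1 x2 y1 y2 X Y by simp
      moreover have "\<omega>r Y = r * \<nu>1 Y + s * \<nu>2 Y" unfolding \<omega>r_def using y1 y2 Y by simp
      ultimately show "\<omega>r (X \<inter> Y) = \<omega>r X * \<omega>r Y" using rx X by (simp add: algebra_simps)
    qed
    then have inA: "\<omega>r \<in> Amal F R x y C \<omega>r \<mu>"
      unfolding Amal_def agree_def using rx by blast
    have "\<forall>\<omega>\<in>Amal F R x y C \<omega>r \<mu>. agree ?By \<omega> (\<lambda>X. r * \<nu>1 X + s * \<nu>2 X)"
    proof
      fix \<omega> assume om: "\<omega> \<in> Amal F R x y C \<omega>r \<mu>"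
      have AC: "A \<subseteq> C" unfolding C_def by blast
      have PCC: "P \<in> Lalg F R y C" using PC unfolding C_def .
      have nPCC: "- P \<in> Lalg F R y C" using Lalg_compl[OF PCC] .
      have PB: "P \<in> ?B" using PBy subs by auto
      have o1P: "\<omega>1 P = 1" using y1 PBy P1 by simp
      have o2P: "\<omega>2 P = 0" using y2 PBy P2 by simp
      have rr: "0 \<le> r" and ss: "0 \<le> s" using rs by auto
      have omr1: "\<forall>X\<in>?B. \<omega>r X = r * \<omega>1 X + s * \<omega>2 X" unfolding \<omega>r_def by simp
      have omr2: "\<forall>X\<in>?B. \<omega>r X = s * \<omega>2 X + r * \<omega>1 X" unfolding \<omega>r_def by simp
      have h1: "\<forall>Y\<in>?By. \<omega> (Y \<inter> P) = r * \<nu>1 Y"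
        by (rule half[OF om AC PCC o1 t1 k2 o1P o2P rr ss omr1])
      have "\<omega>2 (- P) = 1" using k_compl[OF balg_Lalg k2 PB] o2P by simp
      moreover have "\<omega>1 (- P) = 0" using k_compl[OF balg_Lalg k1 PB] o1P by simp
      ultimately have h2: "\<forall>Y\<in>?By. \<omega> (Y \<inter> - P) = s * \<nu>2 Y"
        using half[OF om AC nPCC o2 t2 k1 _ _ ss rr omr2] by blast
      have kom: "keisler ?B \<omega>" using om unfolding Amal_def MAm_def by auto
      show "agree ?By \<omega> (\<lambda>X. r * \<nu>1 X + s * \<nu>2 X)"
        unfolding agree_def
      proof
        fix Y assume Y: "Y \<in> ?By"
        have "\<omega> Y = \<omega> (Y \<inter> P) + \<omega> (Y \<inter> - P)"
          using k_split[OF balg_Lalg kom] Y PB subs by blast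
        then show "\<omega> Y = r * \<nu>1 Y + s * \<nu>2 Y" using h1 h2 Y by simp
      qed
    qed
    moreover have "\<omega>r \<in> Mx F R (x @ y) C" unfolding Mx_def using keisler_mono[OF subs(1) kr] by simp
    moreover have "agree (Lalg F R x C) \<omega>r \<mu>" unfolding agree_def using rx subs(2) by blast
    moreover have "Amal F R x y C \<omega>r \<mu> \<noteq> {}" using inA by blast
    ultimately have "triangle F R x y C \<mu> (\<lambda>X. r * \<nu>1 X + s * \<nu>2 X)"
      unfolding triangle_def by (intro exI[of _ \<omega>r]) blast
    then show "triangle F R x y (A \<union> set b) \<mu> (\<lambda>X. r * \<nu>1 X + s * \<nu>2 X)"
      unfolding C_def .
  qed
qed

end
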